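(* Let $\delta=S/(2\pi\mu)\in(0,1)$, and let $\tau_0=\tau_1/k$, where $\tau_1>k$ is the positive root of $\lambda_1(\tau)=k$. For $a\in(0,b)$ and $\nu=0$, the equation $\mathcal R(a)=0$, with $\mathcal R(a)=kS\,g(-a;\tau_1,k)+2\pi\mu\,g'(-a;\tau_1,k)$, is equivalent to $$\tanh(ak\tau_0)=\frac{\tau_0(1+\delta)}{\tau_0^2+\delta}.$$ Moreover: (i) if $k,b,\delta$ are fixed and $\alpha=1-\beta$ is sufficiently small, this equation has a solution $a^*\in(0,b)$, and $a^*\sim \alpha^2(1+\delta)/(4k)$ as $\alpha\to0$; (ii) if $k,b,\delta$ are fixed and $\beta$ is sufficiently small, this equation has no solution $a\in(0,b)$.
   Context: Fix $k>0$, $b>0$, $\beta\in(0,1)$, $\alpha=1-\beta$. $\lambda_1(\tau)=\dfrac{\alpha\tau\tanh b\tau}{1+\beta\tanh b\tau}$; the equation $\lambda_1(\tau)=k$ has a unique positive root $\tau_1$, and $\tau_1>k$. $g(y;\tau,\lambda)=\tau\cosh\tau y+\lambda\sinh\tau y$, $g'=\partial g/\partial y$. $S>0$ is the area enclosed by a simple closed smooth curve $C$ and $\mu>0$ is its vertical dipole strength: with $n=(n_1,n_2)$ the unit normal to $C$ pointing into its interior, $\Psi$ the solution of $\Delta\Psi=0$ outside $C$, $\partial\Psi/\partial n=n_2$ on $C$, $\nabla\Psi\to 0$ at infinity, $\mu=\frac1{2\pi}(S+\int_C n_2\Psi\,dl)$; one has $S<2\pi\mu$. *)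

theory Defs
  imports "HOL-Analysis.Analysis" "HOL-Library.Landau_Symbols"
begin

definition lambda1 :: "real \<Rightarrow> real \<Rightarrow> real \<Rightarrow> real" where
  "lambda1 \<beta> b \<tau> = (1 - \<beta>) * \<tau> * tanh (b * \<tau>) / (1 + \<beta> * tanh (b * \<tau>))"

definition tau1 :: "real \<Rightarrow> real \<Rightarrow> real \<Rightarrow> real" where
  "tau1 k b \<beta> = (THE \<tau>. \<tau> > 0 \<and> lambda1 \<beta> b \<tau> = k)"

definition tau0 :: "real \<Rightarrow> real \<Rightarrow> real \<Rightarrow> real" where
  "tau0 k b \<beta> = tau1 k b \<beta> / k"

definition g :: "real \<Rightarrow> real \<Rightarrow> real \<Rightarrow> real" where
  "g \<tau> lam y = \<tau> * cosh (\<tau> * y) + lam * sinh (\<tau> * y)"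

definition g' :: "real \<Rightarrow> real \<Rightarrow> real \<Rightarrow> real" where
  "g' \<tau> lam y = deriv (\<lambda>z. g \<tau> lam z) y"

definition Rfun :: "real \<Rightarrow> real \<Rightarrow> real \<Rightarrow> real \<Rightarrow> real \<Rightarrow> real \<Rightarrow> real" where
  "Rfun k b \<beta> S \<mu> a =
     k * S * g (tau1 k b \<beta>) k (- a) + 2 * pi * \<mu> * g' (tau1 k b \<beta>) k (- a)"

definition tanh_eqn :: "real \<Rightarrow> real \<Rightarrow> real \<Rightarrow> real \<Rightarrow> real \<Rightarrow> bool" where
  "tanh_eqn k b \<beta> \<delta> a \<longleftrightarrow>
     tanh (a * k * tau0 k b \<beta>) = tau0 k b \<beta> * (1 + \<delta>) / ((tau0 k b \<beta>)\<^sup>2 + \<delta>)"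

end

theory Submission
  imports Defs
begin

lemma tanh_artanh_real:
  fixes r :: real assumes "-1 < r" "r < 1" shows "tanh (artanh r) = r"
proof -
  define q where "q = (1+r)/(1-r)"
  have q: "q > 0" using assms by (simp add: q_def)
  have "artanh r = ln (sqrt q)" using q by (simp add: artanh_def q_def ln_sqrt)
  moreover have "tanh (ln (sqrt q)) = (q - 1)/(q+1)" using q by (simp add: tanh_ln_real)
  moreover have "(q - 1)/(q+1) = r" using assms by (simp add: q_def field_simps)
  ultimately show ?thesis by simp
qed

lemma lam_mono:
  fixes \<beta> b s \<tau> :: real
  assumes "0 < \<beta>" "\<beta> < 1" "b > 0" "0 < s" "s < \<tau>"
  shows "lambda1 \<beta> b s < lambda1 \<beta> b \<tau>"
proof -
  define p1 where "p1 = tanh (b * s)"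
  define p2 where "p2 = tanh (b * \<tau>)"
  have p1: "0 < p1" using assms by (simp add: p1_def)
  have p12: "p1 < p2" using assms by (simp add: p1_def p2_def)
  have "s * p1 < \<tau> * p2" using assms p1 p12 by (meson mult_strict_mono less_trans less_imp_le)
  hence "s*p1*(1+\<beta> *p2) < \<tau> *p2*(1+\<beta> *p1)"
  proof -
    assume h: "s * p1 < \<tau> * p2"
    have "s*p1*(1+\<beta> *p2) = s*p1 + \<beta> *(s*p1)*p2" by (simp add: algebra_simps)
    also have "\<dots> < \<tau> *p2 + \<beta> *(\<tau> *p2)*p1"
    proof -
      have "s*p1*p2 \<le> \<tau> *p2*p1" using h p1 p12 assms by (simp add: mult.commute mult.left_commute)
      have "\<beta> *(s*p1)*p2 \<le> \<beta> *(\<tau> *p2)*p1"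
        using h p1 p12 assms by (smt (verit, best) mult_le_cancel_left_pos mult_right_mono mult.commute mult.assoc)
      thus ?thesis using h by linarith
    qed
    also have "\<dots> = \<tau> *p2*(1+\<beta> *p1)" by (simp add: algebra_simps)
    finally show ?thesis .
  qed
  moreover have "1+\<beta> *p1 > 0" "1+\<beta> *p2 > 0" using assms p1 p12 by (auto intro!: add_pos_nonneg)
  ultimately have "(1 - \<beta>) * (s*p1/(1+\<beta> *p1)) < (1 - \<beta>) * (\<tau> *p2/(1+\<beta> *p2))"
    using assms by (simp add: divide_simps mult.commute mult.left_commute)
  thus ?thesis by (simp add: lambda1_def p1_def p2_def mult.assoc)
qed

lemma lam_cont:
  fixes \<beta> b :: real assumes "0 < \<beta>" "b > 0"
  shows "continuous_on {0..T} (lambda1 \<beta> b)"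
proof -
  have "\<forall>x\<in>{0..T}. 1 + \<beta> * tanh (b * x) \<noteq> 0"
  proof
    fix x assume "x \<in> {0..T}"
    hence "tanh (b*x) \<ge> 0" using assms by simp
    thus "1 + \<beta> * tanh (b * x) \<noteq> 0" using assms
      by (smt (verit) mult_nonneg_nonneg)
  qed
  thus ?thesis unfolding lambda1_def[abs_def]
    by (intro continuous_intros) auto
qed

lemma tau1_ex:
  fixes k b \<beta> :: real assumes "k > 0" "b > 0" "0 < \<beta>" "\<beta> < 1"
  shows "\<exists>\<tau>>0. lambda1 \<beta> b \<tau> = k"
proof -
  define T where "T = 1 + 2*k/((1-\<beta>)*tanh b)"
  have tb: "0 < tanh b" "tanh b < 1" using assms tanh_real_lt_1 by auto
  have T1: "T \<ge> 1" using assms tb by (simp add: T_def)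
  have tT: "tanh b \<le> tanh (b*T)" using T1 assms by simp
  have tT1: "tanh (b*T) < 1" by (rule tanh_real_lt_1)
  have "k \<le> (1-\<beta>) * T * tanh b / 2"
  proof -
    have "2*k = (1-\<beta>) * (2*k/((1-\<beta>)*tanh b)) * tanh b"
      using assms tb by (simp add: field_simps)
    also have "\<dots> \<le> (1-\<beta>) * T * tanh b"
      using assms tb T_def by (intro mult_right_mono mult_left_mono) auto
    finally show ?thesis by simp
  qed
  also have "\<dots> \<le> (1-\<beta>) * T * tanh (b*T) / 2"
    using assms T1 tT by (intro divide_right_mono mult_left_mono) auto
  also have "\<dots> \<le> lambda1 \<beta> b T"
  proof -
    have pos: "0 < 1 + \<beta> * tanh (b*T)" using assms T1 by (smt (verit) mult_nonneg_nonneg tanh_real_nonneg_iff)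
    have "1 + \<beta> * tanh (b*T) \<le> 2" using assms tT1 T1
      by (smt (verit, best) mult_less_cancel_left1 tanh_real_nonneg_iff mult_pos_pos)
    moreover have "0 \<le> (1-\<beta>) * T * tanh (b*T)" using assms T1 by simp
    ultimately show ?thesis unfolding lambda1_def using pos
      by (intro divide_left_mono) auto
  qed
  finally have kT: "k \<le> lambda1 \<beta> b T" .
  have "lambda1 \<beta> b 0 \<le> k" using assms by (simp add: lambda1_def)
  then obtain x where x: "0 \<le> x" "x \<le> T" "lambda1 \<beta> b x = k"
    using IVT'[of "lambda1 \<beta> b" 0 k T] kT T1 lam_cont[OF assms(3,2)] by auto
  have "x \<noteq> 0" using x assms by (auto simp: lambda1_def)
  hence "x > 0" using x by auto
  thus ?thesis using x(3) by blast
qed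

lemma tau1_spec:
  fixes k b \<beta> :: real assumes "k > 0" "b > 0" "0 < \<beta>" "\<beta> < 1"
  shows "tau1 k b \<beta> > 0 \<and> lambda1 \<beta> b (tau1 k b \<beta>) = k"
proof -
  obtain x where x: "x > 0" "lambda1 \<beta> b x = k" using tau1_ex[OF assms] by auto
  have "y = x" if y: "y > 0 \<and> lambda1 \<beta> b y = k" for y
  proof (rule ccontr)
    assume "y \<noteq> x"
    hence "y < x \<or> x < y" by linarith
    thus False
    proof
      assume "y < x" thus False using lam_mono[OF assms(3,4,2), of y x] x y by linarith
    next
      assume "x < y" thus False using lam_mono[OF assms(3,4,2), of x y] x y by linarith
    qed
  qed
  hence "(THE \<tau>. \<tau> > 0 \<and> lambda1 \<beta> b \<tau> = k) = x" using x by (intro the_equality) blast+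
  hence "tau1 k b \<beta> = x" unfolding tau1_def .
  thus ?thesis using x by simp
qed

lemma tau1_eq:
  fixes k b \<beta> :: real assumes "k > 0" "b > 0" "0 < \<beta>" "\<beta> < 1"
  defines "\<tau> \<equiv> tau1 k b \<beta>"
  shows "\<tau> > 0" "0 < tanh (b*\<tau>)" "tanh (b*\<tau>) < 1"
    "(1-\<beta>) * \<tau> * tanh (b*\<tau>) = k * (1 + \<beta> * tanh (b*\<tau>))"
proof -
  show t: "\<tau> > 0" using tau1_spec[OF assms(1-4)] \<tau>_def by auto
  show p: "0 < tanh (b*\<tau>)" using t assms by simp
  show "tanh (b*\<tau>) < 1" by (rule tanh_real_lt_1)
  have "lambda1 \<beta> b \<tau> = k" using tau1_spec[OF assms(1-4)] \<tau>_def by auto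
  moreover have "0 < 1 + \<beta> * tanh (b*\<tau>)" using p assms by (simp add: add_pos_pos)
  ultimately show "(1-\<beta>) * \<tau> * tanh (b*\<tau>) = k * (1 + \<beta> * tanh (b*\<tau>))"
    unfolding lambda1_def by (simp add: field_simps)
qed

lemma tau1_lower:
  fixes k b \<beta> :: real assumes "k > 0" "b > 0" "0 < \<beta>" "\<beta> < 1"
  shows "tau1 k b \<beta> \<ge> k * min 2 (1 / tanh (2*b*k))"
proof -
  define \<tau> where "\<tau> = tau1 k b \<beta>"
  define t where "t = tanh (b*\<tau>)"
  note E = tau1_eq[OF assms, folded \<tau>_def, folded t_def]
  have "k \<le> k*(1+\<beta>*t)" using E assms by simp
  also have "\<dots> = (1-\<beta>)*\<tau>*t" using E by simp
  also have "\<dots> \<le> \<tau>*t"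
  proof -
    have "\<tau>*t - (1-\<beta>)*\<tau>*t = \<beta>*(\<tau>*t)" by (simp add: algebra_simps)
    moreover have "\<beta>*(\<tau>*t) \<ge> 0" using E(1,2) assms by simp
    ultimately show ?thesis by linarith
  qed
  finally have kt: "k \<le> \<tau> * t" .
  have c: "0 < tanh (2*b*k)" using assms by simp
  show ?thesis
  proof (cases "\<tau> < 2*k")
    case True
    hence "t \<le> tanh (2*b*k)" unfolding t_def using assms E by (simp add: mult.commute)
    hence "k \<le> \<tau> * tanh (2*b*k)" using kt E by (smt (verit) mult_left_mono)
    hence "k / tanh (2*b*k) \<le> \<tau>" using c by (simp add: divide_simps)
    hence "k * (1 / tanh (2*b*k)) \<le> \<tau>" by simp
    moreover have "k * min 2 (1 / tanh (2*b*k)) \<le> k * (1 / tanh (2*b*k))" using assms by (intro mult_left_mono) auto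
    ultimately show ?thesis unfolding \<tau>_def by linarith
  next
    case False
    moreover have "k * min 2 (1 / tanh (2*b*k)) \<le> k * 2" using assms by simp
    ultimately show ?thesis unfolding \<tau>_def by linarith
  qed
qed

lemma part2:
  fixes k b \<delta> :: real assumes "k > 0" "b > 0" "0 < \<delta>" "\<delta> < 1"
  shows "\<exists>\<beta>0 > 0. \<forall>\<beta>. 0 < \<beta> \<and> \<beta> < \<beta>0 \<longrightarrow> \<not> (\<exists>a. 0 < a \<and> a < b \<and> tanh_eqn k b \<beta> \<delta> a)"
proof -
  define m where "m = min 2 (1 / tanh (2*b*k))"
  have c: "0 < tanh (2*b*k)" "tanh (2*b*k) < 1" using assms tanh_real_lt_1 by auto
  have m1: "m > 1" using c by (simp add: m_def)
  define \<beta>0 where "\<beta>0 = min (1/2) (\<delta>*(m-1)/(m*(1+\<delta>)))"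
  have b0: "\<beta>0 > 0" using m1 assms by (simp add: \<beta>0_def)
  have "\<not> (\<exists>a. 0 < a \<and> a < b \<and> tanh_eqn k b \<beta> \<delta> a)" if \<beta>: "0 < \<beta>" "\<beta> < \<beta>0" for \<beta>
  proof
    assume "\<exists>a. 0 < a \<and> a < b \<and> tanh_eqn k b \<beta> \<delta> a"
    then obtain a where a: "0 < a" "a < b" "tanh_eqn k b \<beta> \<delta> a" by auto
    have \<beta>1: "\<beta> < 1" using \<beta> by (simp add: \<beta>0_def)
    have \<beta>2: "\<beta> \<le> \<delta>*(m-1)/(m*(1+\<delta>))" using \<beta> by (simp add: \<beta>0_def)
    define \<tau> where "\<tau> = tau1 k b \<beta>"
    define t where "t = tanh (b*\<tau>)"
    define x where "x = \<tau> / k"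
    note E = tau1_eq[OF assms(1,2) \<beta>(1) \<beta>1, folded \<tau>_def, folded t_def]
    have xm: "x \<ge> m" using tau1_lower[OF assms(1,2) \<beta>(1) \<beta>1] assms
      by (simp add: x_def \<tau>_def m_def field_simps)
    have x1: "x > 1" using xm m1 by simp
    have tx: "t * ((1-\<beta>)*x - \<beta>) = 1"
    proof -
      have "k * (t * ((1-\<beta>)*x - \<beta>)) = (1-\<beta>)*\<tau>*t - k*\<beta>*t" using assms by (simp add: x_def field_simps)
      also have "\<dots> = k" using E(4) by (simp add: algebra_simps)
      finally show ?thesis using assms by simp
    qed
    define r where "r = x*(1+\<delta>)/(x^2+\<delta>)"
    have eq: "tanh (a*\<tau>) = r" using a(3) assms
      by (simp add: tanh_eqn_def tau0_def r_def x_def \<tau>_def)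
    have "tanh (a*\<tau>) < t" unfolding t_def using a E by simp
    hence rt: "r < t" using eq by simp
    have D: "(1-\<beta>)*x - \<beta> > 0"
    proof (rule ccontr)
      assume "\<not> (1-\<beta>)*x - \<beta> > 0"
      hence "t * ((1-\<beta>)*x - \<beta>) \<le> 0" using E(2) by (simp add: mult_nonneg_nonpos)
      thus False using tx by simp
    qed
    have key: "x^2 + \<delta> \<le> x*(1+\<delta>)*((1-\<beta>)*x - \<beta>)"
    proof -
      have "(x-1)/x \<ge> (m-1)/m" using xm m1 by (simp add: field_simps)
      hence h1: "\<delta>*((m-1)/m) \<le> \<delta>*((x-1)/x)" using assms by (intro mult_left_mono) auto
      have "\<beta>*(1+\<delta>) \<le> \<delta>*(m-1)/(m*(1+\<delta>))*(1+\<delta>)" using \<beta>2 assms by (intro mult_right_mono) auto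
      also have "\<dots> = \<delta>*((m-1)/m)"
      proof -
        have "m*(1+\<delta>) \<noteq> 0" "1+\<delta> \<noteq> 0" using assms m1 by auto
        thus ?thesis by (simp add: divide_simps)
      qed
      finally have "\<beta>*(1+\<delta>) \<le> \<delta>*(x-1)/x" using h1 by simp
      hence "\<beta>*(1+\<delta>)*(x*(x+1)) \<le> \<delta>*(x-1)/x*(x*(x+1))" using x1 by (intro mult_right_mono) auto
      also have "\<dots> = \<delta>*(x^2-1)" using x1 by (simp add: field_simps power2_eq_square)
      finally show ?thesis by (simp add: algebra_simps power2_eq_square)
    qed
    have "x*(1+\<delta>)*((1-\<beta>)*x - \<beta>) < t*(x^2+\<delta>)*((1-\<beta>)*x - \<beta>)"
    proof -
      have "x*(1+\<delta>) < t*(x^2+\<delta>)" using rt x1 assms by (simp add: r_def field_simps add_pos_pos)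
      thus ?thesis using D by simp
    qed
    also have "\<dots> = (x^2+\<delta>) * (t * ((1-\<beta>)*x - \<beta>))" by (simp only: mult_ac)
    also have "\<dots> = x^2+\<delta>" using tx by simp
    finally show False using key by simp
  qed
  thus ?thesis using b0 by blast
qed

lemma part1a:
  fixes k b \<delta> :: real assumes "k > 0" "b > 0" "0 < \<delta>" "\<delta> < 1"
  shows "\<exists>\<alpha>0 > 0. \<forall>\<alpha>. 0 < \<alpha> \<and> \<alpha> < \<alpha>0 \<longrightarrow> (\<exists>a. 0 < a \<and> a < b \<and> tanh_eqn k b (1 - \<alpha>) \<delta> a)"
proof -
  have "\<exists>a. 0 < a \<and> a < b \<and> tanh_eqn k b (1 - \<alpha>) \<delta> a" if \<alpha>: "0 < \<alpha>" "\<alpha> < 1/2" for \<alpha>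
  proof -
    have \<beta>: "0 < 1 - \<alpha>" "1 - \<alpha> < 1" using \<alpha> by auto
    define \<tau> where "\<tau> = tau1 k b (1-\<alpha>)"
    define t where "t = tanh (b*\<tau>)"
    define x where "x = \<tau> / k"
    note E = tau1_eq[OF assms(1,2) \<beta>, folded \<tau>_def, folded t_def]
    have tx: "\<alpha> * x * t = 1 + (1-\<alpha>)*t"
    proof -
      have "k * (\<alpha> * x * t) = k * (1 + (1-\<alpha>)*t)" using E(4) assms by (simp add: x_def)
      thus ?thesis using assms by simp
    qed
    have "\<alpha> * (x*t) \<ge> 1" using tx E \<alpha> by (simp add: mult.assoc)
    hence xt: "x*t \<ge> 1/\<alpha>" using \<alpha> by (simp add: field_simps)
    have "1/\<alpha> > 2" using \<alpha> by (simp add: field_simps)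
    hence xt2: "x*t > 1 + \<delta>" using xt assms by linarith
    have x0: "x > 0" using E assms by (simp add: x_def)
    define r where "r = x*(1+\<delta>)/(x^2+\<delta>)"
    have r0: "r > 0" using x0 assms by (auto simp: r_def intro!: divide_pos_pos add_nonneg_pos)
    have "x*(1+\<delta>) < x*(x*t)" using xt2 x0 by simp
    also have "\<dots> \<le> t*(x^2+\<delta>)" using E assms by (simp add: power2_eq_square algebra_simps)
    finally have rt: "r < t" using x0 assms by (simp add: r_def field_simps add_pos_pos)
    have r1: "-1 < r" "r < 1" using r0 rt E by auto
    define a where "a = artanh r / \<tau>"
    have ta: "tanh (a*\<tau>) = r" using E r1 by (simp add: a_def tanh_artanh_real)
    have "a*\<tau> < b*\<tau>" using ta rt unfolding t_def
      by (metis tanh_real_less_iff)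
    hence ab: "a < b" using E by simp
    have "0 < a*\<tau>" using ta r0 by (metis tanh_real_pos_iff)
    hence a0: "0 < a" using E by (simp add: zero_less_mult_iff)
    have "tanh_eqn k b (1 - \<alpha>) \<delta> a" using ta assms
      by (simp add: tanh_eqn_def tau0_def r_def x_def \<tau>_def)
    thus ?thesis using a0 ab by blast
  qed
  thus ?thesis by (intro exI[of _ "1/2"]) auto
qed

lemma part1b:
  fixes k b \<delta> :: real and A :: "real \<Rightarrow> real"
  assumes "k > 0" "b > 0" "0 < \<delta>" "\<delta> < 1"
    and ev: "\<forall>\<^sub>F \<alpha> in at_right 0. 0 < A \<alpha> \<and> A \<alpha> < b \<and> tanh_eqn k b (1 - \<alpha>) \<delta> (A \<alpha>)"
  shows "A \<sim>[at_right 0] (\<lambda>\<alpha>. \<alpha>\<^sup>2 * (1 + \<delta>) / (4 * k))"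
proof -
  define F where "F = at_right (0::real)"
  define \<tau>f where "\<tau>f = (\<lambda>\<alpha>. tau1 k b (1-\<alpha>))"
  define xf where "xf = (\<lambda>\<alpha>. \<tau>f \<alpha> / k)"
  define tf where "tf = (\<lambda>\<alpha>. tanh (b * k * xf \<alpha>))"
  define rf where "rf = (\<lambda>\<alpha>. xf \<alpha> * (1+\<delta>) / ((xf \<alpha>)^2 + \<delta>))"
  have \<tau>x: "\<tau>f \<alpha> = k * xf \<alpha>" for \<alpha> using assms by (simp add: xf_def)
  have small: "\<forall>\<^sub>F \<alpha> in F. 0 < \<alpha> \<and> \<alpha> < 1/2"
    unfolding F_def eventually_at_right_field by (intro exI[of _ "1/2"]) auto
  have props: "xf \<alpha> > 0 \<and> 0 < tf \<alpha> \<and> tf \<alpha> < 1 \<and> \<alpha> * xf \<alpha> = (1 + (1-\<alpha>) * tf \<alpha>) / tf \<alpha>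
      \<and> inverse \<alpha> \<le> xf \<alpha> \<and> rf \<alpha> > 0"
    if \<alpha>: "0 < \<alpha>" "\<alpha> < 1/2" for \<alpha>
  proof -
    have \<beta>: "0 < 1 - \<alpha>" "1 - \<alpha> < 1" using \<alpha> by auto
    note E = tau1_eq[OF assms(1,2) \<beta>, folded \<tau>f_def[THEN fun_cong], unfolded \<tau>x, folded tf_def[THEN fun_cong] mult.assoc]
    have x0: "xf \<alpha> > 0" using E(1) assms by (simp add: zero_less_mult_iff)
    have t: "0 < tf \<alpha>" "tf \<alpha> < 1" using E by (auto simp: tf_def mult.assoc)
    have "k * (\<alpha> * xf \<alpha> * tf \<alpha>) = k * (1 + (1-\<alpha>) * tf \<alpha>)"
      using E(4) by (simp add: tf_def mult.assoc mult.left_commute)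
    hence eq: "\<alpha> * xf \<alpha> * tf \<alpha> = 1 + (1-\<alpha>) * tf \<alpha>" using assms by simp
    hence eq2: "\<alpha> * xf \<alpha> = (1 + (1-\<alpha>) * tf \<alpha>) / tf \<alpha>" using t by (simp add: field_simps)
    have "1 + (1-\<alpha>) * tf \<alpha> \<ge> 1" using t \<beta> by simp
    hence "\<alpha> * xf \<alpha> * tf \<alpha> \<ge> 1" using eq by simp
    hence "\<alpha> * xf \<alpha> \<ge> 1" using t x0 \<alpha>
      by (smt (verit) mult_le_cancel_left1 mult_pos_pos mult.commute)
    hence "inverse \<alpha> \<le> xf \<alpha>" using \<alpha> by (simp add: field_simps)
    moreover have "rf \<alpha> > 0" using x0 assms by (auto simp: rf_def intro!: divide_pos_pos add_nonneg_pos)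
    ultimately show ?thesis using x0 t eq2 by blast
  qed
  have evp: "\<forall>\<^sub>F \<alpha> in F. xf \<alpha> > 0 \<and> 0 < tf \<alpha> \<and> tf \<alpha> < 1 \<and> \<alpha> * xf \<alpha> = (1 + (1-\<alpha>) * tf \<alpha>) / tf \<alpha>
      \<and> inverse \<alpha> \<le> xf \<alpha> \<and> rf \<alpha> > 0 \<and> \<alpha> > 0"
    using small by eventually_elim (use props in auto)
  have xtop: "filterlim xf at_top F"
    by (rule filterlim_at_top_mono[OF filterlim_inverse_at_top_right[folded F_def]])
       (use evp in eventually_elim, auto)
  have "filterlim (\<lambda>\<alpha>. (b*k) * xf \<alpha>) at_top F"
    using assms by (intro filterlim_tendsto_pos_mult_at_top[OF tendsto_const _ xtop]) auto
  hence tlim: "(tf \<longlongrightarrow> 1) F" unfolding tf_def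
    using filterlim_compose[OF tanh_real_at_top] by blast
  have "((\<lambda>\<alpha>. (1 + (1-\<alpha>) * tf \<alpha>) / tf \<alpha>) \<longlongrightarrow> (1 + (1-0)*1)/1) F"
    unfolding F_def by (intro tendsto_intros tlim[unfolded F_def]) auto
  hence "((\<lambda>\<alpha>. (1 + (1-\<alpha>) * tf \<alpha>) / tf \<alpha>) \<longlongrightarrow> 2) F" by simp
  hence ylim: "((\<lambda>\<alpha>. \<alpha> * xf \<alpha>) \<longlongrightarrow> 2) F"
    by (rule Lim_transform_eventually) (use evp in eventually_elim, auto)
  have ix: "((\<lambda>\<alpha>. inverse (xf \<alpha>)) \<longlongrightarrow> 0) F" by (rule tendsto_inverse_0_at_top[OF xtop])
  have "((\<lambda>\<alpha>. (1+\<delta>) / (1 + \<delta> * (inverse (xf \<alpha>))^2)) \<longlongrightarrow> (1+\<delta>) / (1 + \<delta> * 0^2)) F"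
    by (intro tendsto_intros ix) auto
  hence rx0: "((\<lambda>\<alpha>. (1+\<delta>) / (1 + \<delta> * (inverse (xf \<alpha>))^2)) \<longlongrightarrow> 1+\<delta>) F" by simp
  have rx: "((\<lambda>\<alpha>. rf \<alpha> * xf \<alpha>) \<longlongrightarrow> 1+\<delta>) F"
  proof (rule Lim_transform_eventually[OF rx0])
    show "\<forall>\<^sub>F \<alpha> in F. (1+\<delta>) / (1 + \<delta> * (inverse (xf \<alpha>))^2) = rf \<alpha> * xf \<alpha>"
      using evp
    proof eventually_elim
      case (elim \<alpha>)
      hence x0: "xf \<alpha> > 0" by simp
      have "xf \<alpha>^2 + \<delta> > 0" using assms x0 by (simp add: add_pos_pos)
      thus ?case using x0 unfolding rf_def by (simp add: field_simps power2_eq_square)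
    qed
  qed
  have "((\<lambda>\<alpha>. (rf \<alpha> * xf \<alpha>) * inverse (xf \<alpha>)) \<longlongrightarrow> (1+\<delta>) * 0) F"
    by (intro tendsto_intros rx ix)
  hence "((\<lambda>\<alpha>. (rf \<alpha> * xf \<alpha>) * inverse (xf \<alpha>)) \<longlongrightarrow> 0) F" by simp
  hence r0: "(rf \<longlongrightarrow> 0) F"
    by (rule Lim_transform_eventually) (use evp in eventually_elim, auto)
  have rat: "filterlim rf (at 0) F"
    by (rule filterlim_atI[OF r0]) (use evp in eventually_elim, auto)
  have "(artanh has_field_derivative (1 / (1 - 0 ^ 2))) (at (0::real))"
    by (rule artanh_real_has_field_derivative) simp
  hence "((\<lambda>y. artanh y / y) \<longlongrightarrow> 1) (at (0::real))"
    by (simp add: has_field_derivative_iff)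
  hence alim: "((\<lambda>\<alpha>. artanh (rf \<alpha>) / rf \<alpha>) \<longlongrightarrow> 1) F"
    using filterlim_compose[OF _ rat] by blast
  have "((\<lambda>\<alpha>. (artanh (rf \<alpha>) / rf \<alpha>) * ((rf \<alpha> * xf \<alpha>) / (1+\<delta>)) * (4 / (\<alpha> * xf \<alpha>)^2))
          \<longlongrightarrow> 1 * ((1+\<delta>)/(1+\<delta>)) * (4 / 2^2)) F"
    using assms by (intro tendsto_intros alim rx ylim) auto
  hence lim: "((\<lambda>\<alpha>. (artanh (rf \<alpha>) / rf \<alpha>) * ((rf \<alpha> * xf \<alpha>) / (1+\<delta>)) * (4 / (\<alpha> * xf \<alpha>)^2))
          \<longlongrightarrow> 1) F" using assms by simp
  have "((\<lambda>\<alpha>. A \<alpha> / (\<alpha>\<^sup>2 * (1 + \<delta>) / (4 * k))) \<longlongrightarrow> 1) F"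
  proof (rule Lim_transform_eventually[OF lim])
    show "\<forall>\<^sub>F \<alpha> in F. (artanh (rf \<alpha>) / rf \<alpha>) * ((rf \<alpha> * xf \<alpha>) / (1+\<delta>)) * (4 / (\<alpha> * xf \<alpha>)^2)
       = A \<alpha> / (\<alpha>\<^sup>2 * (1 + \<delta>) / (4 * k))"
      using evp ev[folded F_def]
    proof eventually_elim
      case (elim \<alpha>)
      hence x0: "xf \<alpha> > 0" and r0: "rf \<alpha> > 0" and a0: "\<alpha> > 0" by auto
      have "tanh (A \<alpha> * k * (\<tau>f \<alpha> / k)) = rf \<alpha>"
        using elim by (simp add: tanh_eqn_def tau0_def rf_def xf_def \<tau>f_def)
      hence "tanh (A \<alpha> * (k * xf \<alpha>)) = rf \<alpha>" using assms by (simp add: \<tau>x mult.assoc)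
      hence "A \<alpha> * (k * xf \<alpha>) = artanh (rf \<alpha>)" by (metis artanh_tanh_real)
      hence Aeq: "A \<alpha> = artanh (rf \<alpha>) / (k * xf \<alpha>)" using x0 assms by (simp add: field_simps)
      have d: "1 + \<delta> \<noteq> 0" using assms by simp
      show ?case unfolding Aeq using x0 r0 a0 assms d by (simp add: divide_simps power2_eq_square)
    qed
  qed
  thus ?thesis unfolding F_def by (rule asymp_equivI')
qed

lemma g'_eq: "g' \<tau> lam y = \<tau>^2 * sinh (\<tau>*y) + lam * \<tau> * cosh (\<tau>*y)"
proof -
  have "((\<lambda>z. g \<tau> lam z) has_field_derivative \<tau>^2 * sinh (\<tau>*y) + lam * \<tau> * cosh (\<tau>*y)) (at y)"
    unfolding g_def by (auto intro!: derivative_eq_intros simp: power2_eq_square algebra_simps)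
  thus ?thesis unfolding g'_def by (rule DERIV_imp_deriv)
qed

lemma R_equiv:
  fixes k b \<beta> S \<mu> a :: real
  assumes "k > 0" "\<tau> > 0" "S > 0" "\<mu> > 0"
  defines "M \<equiv> 2*pi*\<mu>"
  shows "(k * S * g \<tau> k (- a) + 2 * pi * \<mu> * g' \<tau> k (- a) = 0) \<longleftrightarrow>
    tanh (a * k * (\<tau>/k)) = (\<tau>/k) * (1 + S/M) / ((\<tau>/k)\<^sup>2 + S/M)"
proof -
  define c where "c = cosh (\<tau>*a)"
  define s where "s = sinh (\<tau>*a)"
  have M: "M > 0" using assms by (simp add: M_def)
  have c: "c > 0" by (simp add: c_def)
  have L: "k * S * g \<tau> k (- a) + 2 * pi * \<mu> * g' \<tau> k (- a) = k*\<tau>*c*(M+S) - s*(k^2*S + M*\<tau>^2)"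
    unfolding g'_eq g_def c_def s_def M_def by (simp add: algebra_simps power2_eq_square)
  have t: "tanh (a * k * (\<tau>/k)) = s / c" using assms by (simp add: tanh_def s_def c_def mult.commute)
  have d: "k^2*S + M*\<tau>^2 > 0" using assms(1-4) M by (simp add: add_pos_pos)
  have e1: "(\<tau>/k)*(1+S/M) = (k*\<tau>*(M+S))/(k^2*M)"
    using assms(1-4) M by (simp add: field_simps power2_eq_square)
  have e2: "(\<tau>/k)\<^sup>2 + S/M = (k^2*S+M*\<tau>^2)/(k^2*M)"
    using assms(1-4) M by (simp add: field_simps power2_eq_square)
  have r: "(\<tau>/k) * (1 + S/M) / ((\<tau>/k)\<^sup>2 + S/M) = k*\<tau>*(M+S) / (k^2*S + M*\<tau>^2)"
    unfolding e1 e2 using d assms(1-4) M by simp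
  show ?thesis unfolding L t r using c d
    by (simp add: field_simps) (auto simp: algebra_simps)
qed

theorem mainTheorem4:
  fixes k b :: real
  assumes "k > 0" and "b > 0"
  shows
    "(\<forall>\<beta> S \<mu> a. 0 < \<beta> \<and> \<beta> < 1 \<and> S > 0 \<and> \<mu> > 0 \<and> S < 2 * pi * \<mu> \<and> 0 < a \<and> a < b \<longrightarrow>
        (Rfun k b \<beta> S \<mu> a = 0 \<longleftrightarrow> tanh_eqn k b \<beta> (S / (2 * pi * \<mu>)) a))
     \<and> (\<forall>\<delta>. 0 < \<delta> \<and> \<delta> < 1 \<longrightarrow>
          (\<exists>\<alpha>0 > 0. \<forall>\<alpha>. 0 < \<alpha> \<and> \<alpha> < \<alpha>0 \<longrightarrow>
              (\<exists>a. 0 < a \<and> a < b \<and> tanh_eqn k b (1 - \<alpha>) \<delta> a))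
        \<and> (\<forall>A :: real \<Rightarrow> real.
              (\<forall>\<^sub>F \<alpha> in at_right 0. 0 < A \<alpha> \<and> A \<alpha> < b \<and> tanh_eqn k b (1 - \<alpha>) \<delta> (A \<alpha>))
              \<longrightarrow> A \<sim>[at_right 0] (\<lambda>\<alpha>. \<alpha>\<^sup>2 * (1 + \<delta>) / (4 * k))))
     \<and> (\<forall>\<delta>. 0 < \<delta> \<and> \<delta> < 1 \<longrightarrow>
          (\<exists>\<beta>0 > 0. \<forall>\<beta>. 0 < \<beta> \<and> \<beta> < \<beta>0 \<longrightarrow>
              \<not> (\<exists>a. 0 < a \<and> a < b \<and> tanh_eqn k b \<beta> \<delta> a)))"
proof (intro conjI allI impI)
  fix \<beta> S \<mu> a :: real
  assume h: "0 < \<beta> \<and> \<beta> < 1 \<and> S > 0 \<and> \<mu> > 0 \<and> S < 2 * pi * \<mu> \<and> 0 < a \<and> a < b"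
  have t: "tau1 k b \<beta> > 0" using tau1_eq(1)[OF assms] h by blast
  show "Rfun k b \<beta> S \<mu> a = 0 \<longleftrightarrow> tanh_eqn k b \<beta> (S / (2 * pi * \<mu>)) a"
    using R_equiv[OF assms(1) t, of S \<mu> a] h
    unfolding Rfun_def tanh_eqn_def tau0_def by simp
next
  fix \<delta> :: real assume "0 < \<delta> \<and> \<delta> < 1"
  thus "\<exists>\<alpha>0 > 0. \<forall>\<alpha>. 0 < \<alpha> \<and> \<alpha> < \<alpha>0 \<longrightarrow> (\<exists>a. 0 < a \<and> a < b \<and> tanh_eqn k b (1 - \<alpha>) \<delta> a)"
    using part1a[OF assms] by blast
next
  fix \<delta> :: real and A :: "real \<Rightarrow> real"
  assume "0 < \<delta> \<and> \<delta> < 1"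
    and "\<forall>\<^sub>F \<alpha> in at_right 0. 0 < A \<alpha> \<and> A \<alpha> < b \<and> tanh_eqn k b (1 - \<alpha>) \<delta> (A \<alpha>)"
  thus "A \<sim>[at_right 0] (\<lambda>\<alpha>. \<alpha>\<^sup>2 * (1 + \<delta>) / (4 * k))"
    using part1b[OF assms] by blast
next
  fix \<delta> :: real assume "0 < \<delta> \<and> \<delta> < 1"
  thus "\<exists>\<beta>0 > 0. \<forall>\<beta>. 0 < \<beta> \<and> \<beta> < \<beta>0 \<longrightarrow> \<not> (\<exists>a. 0 < a \<and> a < b \<and> tanh_eqn k b \<beta> \<delta> a)"
    using part2[OF assms] by blast
qed

end
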